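(* For every $p>0$ and every $\psi\in\mathcal H(V)$, $S_p(\psi)=\psi^{\top}L_p\psi$, where $L_p=D^{-1/2}(D_p-W_p)D^{-1/2}$ is built from $\psi$ as described in the context. In particular $S_2(\psi)=\psi^\top L\psi$ with $L=L_2=D^{-1/2}(D-W)D^{-1/2}$ independent of $\psi$.
   Context: Let $V$ be a finite nonempty set and $E_{un}$ a finite set of subsets of $V$ (hyperedges), each of cardinality at least $2$, with weights $w(e)>0$. Let $E$ be the set of all ordered tuples $e=[v_1,\dots,v_k]$ of distinct vertices whose underlying set belongs to $E_{un}$; write $w(e)$ for the weight of the underlying set, $\delta_e=k$ (also $\delta_e=|e|$ for $e\in E_{un}$), $e_{[1]}=v_1$. Degree $d(v)=\sum_{e\in E_{un}:\,v\in e}w(e)>0$, $D=\mathrm{diag}(d(v))$; $w(u,v)=\sum_{e\in E_{un}:\,u,v\in e}\frac{w(e)}{\delta_e-1}$ for $u\ne v$, $w(v,v)=0$, $W=(w(u,v))$. Gradient: $(\nabla\psi)([v_1,\dots,v_k])=\sqrt{\tfrac{w(e)}{k-1}}\sum_{i=1}^{k}\big(\tfrac{\psi(v_i)}{\sqrt{d(v_i)}}-\tfrac{\psi(v_1)}{\sqrt{d(v_1)}}\big)$. Node gradient norm: $\|\nabla\psi(v)\|=\big(\sum_{e\in E:\,e_{[1]}=v}\frac{(\nabla\psi)(e)^2}{\delta_e!}\big)^{1/2}$. $S_p(\psi)=\sum_{v\in V}\|\nabla\psi(v)\|^p$. Given $\psi$, let $g(v)=\|\nabla\psi(v)\|^{p-2}$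 if $\|\nabla\psi(v)\|>0$ and $g(v)=1$ otherwise; for $e\in E_{un}$, $\bar g_e=\frac1{\delta_e}\sum_{v'\in e}g(v')$; $w_p(u,v)=\sum_{e\in E_{un}:\,u,v\in e}\frac{w(e)}{\delta_e-1}(g(u)+g(v)-\bar g_e)$ for $u\neq v$, $w_p(v,v)=0$; $d_p(v)=d(v)g(v)-\sum_{e\in E_{un}:\,v\in e}\frac{w(e)}{\delta_e-1}(g(v)-\bar g_e)$; $W_p=(w_p(u,v))$, $D_p=\mathrm{diag}(d_p(v))$. *)

theory Defs
  imports Complex_Main
begin

definition deg :: "'v set set \<Rightarrow> ('v set \<Rightarrow> real) \<Rightarrow> 'v \<Rightarrow> real" where
  "deg Eun w v = (\<Sum>e\<in>{e\<in>Eun. v \<in> e}. w e)"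

definition wadj :: "'v set set \<Rightarrow> ('v set \<Rightarrow> real) \<Rightarrow> 'v \<Rightarrow> 'v \<Rightarrow> real" where
  "wadj Eun w u v = (if u = v then 0
     else (\<Sum>e\<in>{e\<in>Eun. u \<in> e \<and> v \<in> e}. w e / (real (card e) - 1)))"

definition otuples :: "'v set set \<Rightarrow> 'v list set" where
  "otuples Eun = {xs. distinct xs \<and> set xs \<in> Eun}"

definition grad :: "'v set set \<Rightarrow> ('v set \<Rightarrow> real) \<Rightarrow> ('v \<Rightarrow> real) \<Rightarrow> 'v list \<Rightarrow> real" where
  "grad Eun w \<psi> xs = sqrt (w (set xs) / (real (length xs) - 1)) *
     (\<Sum>x\<leftarrow>xs. \<psi> x / sqrt (deg Eun w x) - \<psi> (hd xs) / sqrt (deg Eun w (hd xs)))"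

definition nodegradnorm :: "'v set set \<Rightarrow> ('v set \<Rightarrow> real) \<Rightarrow> ('v \<Rightarrow> real) \<Rightarrow> 'v \<Rightarrow> real" where
  "nodegradnorm Eun w \<psi> v = sqrt (\<Sum>xs\<in>{xs\<in>otuples Eun. hd xs = v}.
      (grad Eun w \<psi> xs)^2 / (fact (length xs)))"

definition Sp :: "'v set \<Rightarrow> 'v set set \<Rightarrow> ('v set \<Rightarrow> real) \<Rightarrow> real \<Rightarrow> ('v \<Rightarrow> real) \<Rightarrow> real" where
  "Sp V Eun w p \<psi> = (\<Sum>v\<in>V. nodegradnorm Eun w \<psi> v powr p)"

definition gfun :: "'v set set \<Rightarrow> ('v set \<Rightarrow> real) \<Rightarrow> real \<Rightarrow> ('v \<Rightarrow> real) \<Rightarrow> 'v \<Rightarrow> real" where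
  "gfun Eun w p \<psi> v = (if nodegradnorm Eun w \<psi> v > 0
     then nodegradnorm Eun w \<psi> v powr (p - 2) else 1)"

definition gbar :: "'v set set \<Rightarrow> ('v set \<Rightarrow> real) \<Rightarrow> real \<Rightarrow> ('v \<Rightarrow> real) \<Rightarrow> 'v set \<Rightarrow> real" where
  "gbar Eun w p \<psi> e = (\<Sum>v'\<in>e. gfun Eun w p \<psi> v') / real (card e)"

definition wp :: "'v set set \<Rightarrow> ('v set \<Rightarrow> real) \<Rightarrow> real \<Rightarrow> ('v \<Rightarrow> real) \<Rightarrow> 'v \<Rightarrow> 'v \<Rightarrow> real" where
  "wp Eun w p \<psi> u v = (if u = v then 0
     else (\<Sum>e\<in>{e\<in>Eun. u \<in> e \<and> v \<in> e}. w e / (real (card e) - 1) *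
            (gfun Eun w p \<psi> u + gfun Eun w p \<psi> v - gbar Eun w p \<psi> e)))"

definition dp :: "'v set set \<Rightarrow> ('v set \<Rightarrow> real) \<Rightarrow> real \<Rightarrow> ('v \<Rightarrow> real) \<Rightarrow> 'v \<Rightarrow> real" where
  "dp Eun w p \<psi> v = deg Eun w v * gfun Eun w p \<psi> v -
     (\<Sum>e\<in>{e\<in>Eun. v \<in> e}. w e / (real (card e) - 1) * (gfun Eun w p \<psi> v - gbar Eun w p \<psi> e))"

definition Lp :: "'v set set \<Rightarrow> ('v set \<Rightarrow> real) \<Rightarrow> real \<Rightarrow> ('v \<Rightarrow> real) \<Rightarrow> 'v \<Rightarrow> 'v \<Rightarrow> real" where
  "Lp Eun w p \<psi> u v = ((if u = v then dp Eun w p \<psi> u else 0) - wp Eun w p \<psi> u v)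
      / (sqrt (deg Eun w u) * sqrt (deg Eun w v))"

definition Lap :: "'v set set \<Rightarrow> ('v set \<Rightarrow> real) \<Rightarrow> 'v \<Rightarrow> 'v \<Rightarrow> real" where
  "Lap Eun w u v = ((if u = v then deg Eun w u else 0) - wadj Eun w u v)
      / (sqrt (deg Eun w u) * sqrt (deg Eun w v))"

definition quadform :: "'v set \<Rightarrow> ('v \<Rightarrow> 'v \<Rightarrow> real) \<Rightarrow> ('v \<Rightarrow> real) \<Rightarrow> real" where
  "quadform V M \<psi> = (\<Sum>u\<in>V. \<Sum>v\<in>V. \<psi> u * M u v * \<psi> v)"

end

theory Submission
  imports Defs "HOL-Combinatorics.Multiset_Permutations"
begin

lemma edge_identity:
  fixes g phi :: "'a \<Rightarrow> real"
  assumes "finite e" "e \<noteq> {}"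
  shows "(\<Sum>u\<in>e. \<Sum>v\<in>e. phi u * ((if u = v then real (card e) * g u else 0)
            - (g u + g v - (\<Sum>x\<in>e. g x) / real (card e))) * phi v)
       = (\<Sum>v\<in>e. g v * ((\<Sum>x\<in>e. phi x) - real (card e) * phi v)^2) / real (card e)"
proof -
  define k where "k = real (card e)"
  define s where "s = (\<Sum>x\<in>e. phi x)"
  define G where "G = (\<Sum>x\<in>e. g x)"
  define H where "H = (\<Sum>x\<in>e. g x * phi x)"
  define P where "P = (\<Sum>x\<in>e. g x * phi x^2)"
  have k0: "k > 0" using assms by (simp add: k_def card_gt_0_iff)
  have L1: "(\<Sum>u\<in>e. \<Sum>v\<in>e. phi u * (if u = v then k * g u else 0) * phi v) = k * P"
  proof -
    have "(\<Sum>u\<in>e. \<Sum>v\<in>e. phi u * (if u = v then k * g u else 0) * phi v)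
        = (\<Sum>u\<in>e. \<Sum>v\<in>e. if u = v then k * (g u * phi u^2) else 0)"
      by (intro sum.cong refl) (auto simp: power2_eq_square)
    also have "\<dots> = (\<Sum>u\<in>e. k * (g u * phi u^2))" using assms(1) by simp
    finally show ?thesis by (simp add: P_def sum_distrib_left)
  qed
  have L2: "(\<Sum>u\<in>e. \<Sum>v\<in>e. phi u * (g u + g v - G / k) * phi v) = 2 * H * s - G / k * s^2"
  proof -
    have "(\<Sum>u\<in>e. \<Sum>v\<in>e. phi u * (g u + g v - G / k) * phi v)
       = (\<Sum>u\<in>e. \<Sum>v\<in>e. (g u * phi u) * phi v + phi u * (g v * phi v) - G/k * (phi u * phi v))"
      by (intro sum.cong refl) (simp add: algebra_simps)
    also have "\<dots> = (\<Sum>u\<in>e. \<Sum>v\<in>e. (g u * phi u) * phi v) + (\<Sum>u\<in>e. \<Sum>v\<in>e. phi u * (g v * phi v))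
        - (\<Sum>u\<in>e. \<Sum>v\<in>e. G/k * (phi u * phi v))"
      by (simp add: sum.distrib sum_subtractf)
    also have "\<dots> = H * s + s * H - G/k * (s * s)"
    proof -
      have a: "(\<Sum>u\<in>e. \<Sum>v\<in>e. (g u * phi u) * phi v) = H * s"
      proof -
        have "(\<Sum>u\<in>e. \<Sum>v\<in>e. (g u * phi u) * phi v) = (\<Sum>u\<in>e. (g u * phi u) * s)"
          by (simp add: s_def sum_distrib_left)
        also have "\<dots> = H * s" by (simp add: H_def sum_distrib_right)
        finally show ?thesis .
      qed
      have b: "(\<Sum>u\<in>e. \<Sum>v\<in>e. phi u * (g v * phi v)) = s * H"
      proof -
        have "(\<Sum>u\<in>e. \<Sum>v\<in>e. phi u * (g v * phi v)) = (\<Sum>u\<in>e. phi u * H)"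
          by (simp add: H_def sum_distrib_left)
        also have "\<dots> = s * H" by (simp add: s_def sum_distrib_right)
        finally show ?thesis .
      qed
      have c0: "(\<Sum>u\<in>e. \<Sum>v\<in>e. phi u * phi v) = s * s"
      proof -
        have "(\<Sum>u\<in>e. \<Sum>v\<in>e. phi u * phi v) = (\<Sum>u\<in>e. phi u * s)"
          by (simp add: s_def sum_distrib_left)
        also have "\<dots> = s * s" by (simp add: s_def sum_distrib_right)
        finally show ?thesis .
      qed
      have c: "(\<Sum>u\<in>e. \<Sum>v\<in>e. G/k * (phi u * phi v)) = G/k * (s * s)"
        unfolding c0[symmetric] by (simp add: sum_distrib_left)
      show ?thesis using a b c by simp
    qed
    finally show ?thesis by (simp add: power2_eq_square algebra_simps)
  qed
  have R: "(\<Sum>v\<in>e. g v * (s - k * phi v)^2) = G * s^2 - 2 * k * s * H + k^2 * P"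
  proof -
    have "(\<Sum>v\<in>e. g v * (s - k * phi v)^2) = (\<Sum>v\<in>e. s^2 * g v - (2*k*s) * (g v * phi v) + k^2 * (g v * phi v^2))"
      by (intro sum.cong refl) (simp add: power2_eq_square algebra_simps)
    also have "\<dots> = (\<Sum>v\<in>e. s^2 * g v) - (\<Sum>v\<in>e. (2*k*s) * (g v * phi v)) + (\<Sum>v\<in>e. k^2 * (g v * phi v^2))"
      by (simp add: sum.distrib sum_subtractf)
    also have "\<dots> = s^2 * G - (2*k*s) * H + k^2 * P"
      by (simp only: sum_distrib_left[symmetric] G_def H_def P_def)
    finally show ?thesis by (simp add: algebra_simps)
  qed
  have "(\<Sum>u\<in>e. \<Sum>v\<in>e. phi u * ((if u = v then k * g u else 0) - (g u + g v - G / k)) * phi v)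
      = (\<Sum>u\<in>e. \<Sum>v\<in>e. phi u * (if u = v then k * g u else 0) * phi v) - (\<Sum>u\<in>e. \<Sum>v\<in>e. phi u * (g u + g v - G / k) * phi v)"
    by (simp add: sum_subtractf[symmetric] algebra_simps)
  also have "\<dots> = (G * s^2 - 2 * k * s * H + k^2 * P) / k" using k0 L1 L2
    by (simp add: field_simps power2_eq_square)
  finally have F: "(\<Sum>u\<in>e. \<Sum>v\<in>e. phi u * ((if u = v then k * g u else 0) - (g u + g v - G / k)) * phi v)
     = (\<Sum>v\<in>e. g v * (s - k * phi v)^2) / k" using R by simp
  show ?thesis unfolding k_def[symmetric] s_def[symmetric] G_def[symmetric] by (rule F)
qed

lemma hd_tuples:
  assumes "finite e" "v \<in> e"
  shows "{xs. distinct xs \<and> set xs = e \<and> hd xs = v} = (\<lambda>xs. v # xs) ` permutations_of_set (e - {v})"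
proof (intro equalityI subsetI)
  fix xs assume "xs \<in> {xs. distinct xs \<and> set xs = e \<and> hd xs = v}"
  hence h: "distinct xs" "set xs = e" "hd xs = v" by auto
  have ne: "xs \<noteq> []" using h(2) assms(2) by auto
  define ys where "ys = tl xs"
  have ys: "xs = v # ys" using ne h(3) unfolding ys_def by (metis list.collapse)
  have d: "distinct ys" "v \<notin> set ys" using h(1) ys by simp_all
  have "set ys = e - {v}"
  proof -
    have "insert v (set ys) = e" using h(2) ys by simp
    thus ?thesis using d(2) by blast
  qed
  hence "ys \<in> permutations_of_set (e - {v})"
    using d unfolding permutations_of_set_def by simp
  thus "xs \<in> (\<lambda>xs. v # xs) ` permutations_of_set (e - {v})"
    using ys by (rule rev_image_eqI)
next
  fix xs assume "xs \<in> (\<lambda>xs. v # xs) ` permutations_of_set (e - {v})"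
  then obtain ys where ys: "xs = v # ys" "set ys = e - {v}" "distinct ys"
    unfolding permutations_of_set_def by blast
  have "set xs = e" using ys(1,2) assms(2) by auto
  moreover have "distinct xs" using ys by simp
  moreover have "hd xs = v" using ys by simp
  ultimately show "xs \<in> {xs. distinct xs \<and> set xs = e \<and> hd xs = v}" by simp
qed

lemma card_hd_tuples:
  assumes "finite e" "v \<in> e"
  shows "card {xs. distinct xs \<and> set xs = e \<and> hd xs = v} = fact (card e - 1)"
  using assms by (simp add: hd_tuples card_image)


lemma grad_eq:
  assumes "distinct xs" "set xs = e" "hd xs = v" "xs \<noteq> []"
  shows "grad Eun w \<psi> xs = sqrt (w e / (real (card e) - 1)) *
           ((\<Sum>x\<in>e. \<psi> x / sqrt (deg Eun w x)) - real (card e) * (\<psi> v / sqrt (deg Eun w v)))"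
proof -
  have "(\<Sum>x\<leftarrow>xs. \<psi> x / sqrt (deg Eun w x) - \<psi> (hd xs) / sqrt (deg Eun w (hd xs)))
      = (\<Sum>x\<in>e. \<psi> x / sqrt (deg Eun w x) - \<psi> v / sqrt (deg Eun w v))"
    using assms by (simp add: sum_list_distinct_conv_sum_set)
  also have "\<dots> = (\<Sum>x\<in>e. \<psi> x / sqrt (deg Eun w x)) - real (card e) * (\<psi> v / sqrt (deg Eun w v))"
    by (simp add: sum_subtractf)
  moreover have "length xs = card e" using assms distinct_card by metis
  ultimately show ?thesis using assms by (simp add: grad_def)
qed

lemma gen:
  fixes A K F :: real
  assumes "F \<noteq> 0" "K \<noteq> 0"
  shows "F * (A / (K * F)) = A / K"
  using assms by (simp add: field_simps)

lemma N2:
  assumes fin: "finite Eun" and E: "\<forall>e\<in>Eun. finite e \<and> card e \<ge> 2"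
    and wpos: "\<forall>e\<in>Eun. w e > 0"
  shows "(nodegradnorm Eun w \<psi> v)^2 = (\<Sum>e\<in>{e\<in>Eun. v \<in> e}.
      w e / (real (card e) - 1) * ((\<Sum>x\<in>e. \<psi> x / sqrt (deg Eun w x)) - real (card e) * (\<psi> v / sqrt (deg Eun w v)))^2
      / real (card e))"
proof -
  define T where "T = {xs\<in>otuples Eun. hd xs = v}"
  define f where "f = (\<lambda>xs. (grad Eun w \<psi> xs)^2 / (fact (length xs) :: real))"
  define c where "c = (\<lambda>e. (\<Sum>x\<in>e. \<psi> x / sqrt (deg Eun w x)) - real (card e) * (\<psi> v / sqrt (deg Eun w v)))"
  have finT: "finite T"
  proof (rule finite_subset)
    show "T \<subseteq> \<Union> (permutations_of_set ` Eun)"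
    proof
      fix xs assume "xs \<in> T"
      hence a1: "set xs \<in> Eun" "distinct xs" by (auto simp: T_def otuples_def)
      hence "xs \<in> permutations_of_set (set xs)" by (simp add: permutations_of_set_def)
      thus "xs \<in> \<Union> (permutations_of_set ` Eun)" using a1(1) by blast
    qed
    show "finite (\<Union> (permutations_of_set ` Eun))" using fin by simp
  qed
  have img: "set ` T \<subseteq> {e\<in>Eun. v \<in> e}"
  proof
    fix e assume "e \<in> set ` T"
    then obtain xs where xs: "xs \<in> T" "e = set xs" by auto
    hence "set xs \<in> Eun" "hd xs = v" by (auto simp: T_def otuples_def)
    moreover have "xs \<noteq> []"
    proof
      assume "xs = []"
      hence "card (set xs) = 0" by simp
      moreover have "card (set xs) \<ge> 2" using E \<open>set xs \<in> Eun\<close> by blast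
      ultimately show False by simp
    qed
    ultimately show "e \<in> {e\<in>Eun. v \<in> e}" using xs by auto
  qed
  have finE: "finite {e\<in>Eun. v \<in> e}" using fin by simp
  have grp: "sum f T = (\<Sum>e\<in>{e\<in>Eun. v \<in> e}. sum f {xs. xs \<in> T \<and> set xs = e})"
    using sum.group[OF finT finE img, of f] by simp
  have inner: "sum f {xs. xs \<in> T \<and> set xs = e} = w e / (real (card e) - 1) * (c e)^2 / real (card e)"
    if e: "e \<in> Eun" "v \<in> e" for e
  proof -
    have fe: "finite e" and ce: "card e \<ge> 2" using E e by auto
    have we: "w e / (real (card e) - 1) \<ge> 0" using wpos e ce by auto
    have H: "{xs. xs \<in> T \<and> set xs = e} = {xs. distinct xs \<and> set xs = e \<and> hd xs = v}"
      using e by (auto simp: T_def otuples_def)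
    have "sum f {xs. distinct xs \<and> set xs = e \<and> hd xs = v}
        = (\<Sum>xs\<in>{xs. distinct xs \<and> set xs = e \<and> hd xs = v}. w e / (real (card e) - 1) * (c e)^2 / fact (card e))"
    proof (intro sum.cong refl)
      fix xs assume xs: "xs \<in> {xs. distinct xs \<and> set xs = e \<and> hd xs = v}"
      hence ne: "xs \<noteq> []" using e by auto
      have "grad Eun w \<psi> xs = sqrt (w e / (real (card e) - 1)) * c e"
        using grad_eq[of xs e v] xs ne by (simp add: c_def)
      moreover have "length xs = card e"
      proof -
        have "distinct xs" "set xs = e" using xs by auto
        thus ?thesis using distinct_card by metis
      qed
      ultimately show "f xs = w e / (real (card e) - 1) * (c e)^2 / fact (card e)"
        using xs we by (simp add: f_def power_mult_distrib)
    qed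
    also have "\<dots> = fact (card e - 1) * (w e / (real (card e) - 1) * (c e)^2 / fact (card e))"
      using card_hd_tuples[OF fe e(2)] by simp
    also have "\<dots> = w e / (real (card e) - 1) * (c e)^2 / real (card e)"
    proof -
      have fr: "(fact (card e) :: real) = real (card e) * fact (card e - 1)"
        by (subst fact_reduce) (use ce in auto)
      have p1: "(fact (card e - 1) :: real) \<noteq> 0" by simp
      have p2: "real (card e) \<noteq> 0" using ce by simp
      show ?thesis unfolding fr by (rule gen[OF p1 p2])
    qed
    finally show ?thesis using H by simp
  qed
  have nn: "0 \<le> sum f T" unfolding f_def by (intro sum_nonneg) simp
  have "(nodegradnorm Eun w \<psi> v)^2 = sum f T"
    unfolding nodegradnorm_def using nn by (simp add: T_def f_def)
  also have "\<dots> = (\<Sum>e\<in>{e\<in>Eun. v \<in> e}. w e / (real (card e) - 1) * (c e)^2 / real (card e))"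
    unfolding grp by (intro sum.cong refl) (simp add: inner)
  finally show ?thesis by (simp add: c_def)
qed


lemma cancel_lemma:
  fixes a b c d x :: real
  shows "a * (x / (b * c)) * d = a / b * x * (d / c)"
  by (simp add: field_simps)

lemma restrict2:
  assumes "finite V" "e \<subseteq> V"
  shows "(\<Sum>u\<in>V. \<Sum>v\<in>V. if u \<in> e \<and> v \<in> e then f u v else 0) = (\<Sum>u\<in>e. \<Sum>v\<in>e. f u v)"
proof -
  have fe: "finite e" using assms finite_subset by blast
  have eq: "{x\<in>V. x \<in> e} = e" using assms by auto
  have "(\<Sum>u\<in>V. \<Sum>v\<in>V. if u \<in> e \<and> v \<in> e then f u v else 0)
      = (\<Sum>u\<in>V. if u \<in> e then (\<Sum>v\<in>V. if v \<in> e then f u v else 0) else 0)"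
    by (intro sum.cong refl) auto
  also have "\<dots> = (\<Sum>u\<in>V. if u \<in> e then (\<Sum>v\<in>e. f u v) else 0)"
  proof -
    have "(\<Sum>v\<in>V. if v \<in> e then f u v else 0) = (\<Sum>v\<in>e. f u v)" for u
      using sum.inter_filter[OF assms(1), of "f u" "\<lambda>v. v \<in> e", symmetric] eq by simp
    thus ?thesis by (simp only:)
  qed
  also have "\<dots> = (\<Sum>u\<in>e. \<Sum>v\<in>e. f u v)"
    using sum.inter_filter[OF assms(1), of "\<lambda>u. \<Sum>v\<in>e. f u v" "\<lambda>u. u \<in> e", symmetric] eq by simp
  finally show ?thesis .
qed

lemma restrict1:
  assumes "finite V" "e \<subseteq> V"
  shows "(\<Sum>v\<in>{v\<in>V. v \<in> e}. f v) = (\<Sum>v\<in>e. f v)"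
proof -
  have "{x\<in>V. x \<in> e} = e" using assms by auto
  thus ?thesis by simp
qed

theorem proposition3:
  fixes V :: "'v set" and Eun :: "'v set set" and w :: "'v set \<Rightarrow> real"
    and p :: real and \<psi> :: "'v \<Rightarrow> real"
  assumes "finite V" and "V \<noteq> {}" and "finite Eun"
    and "\<forall>e\<in>Eun. e \<subseteq> V \<and> card e \<ge> 2"
    and "\<forall>e\<in>Eun. w e > 0"
    and "\<forall>v\<in>V. deg Eun w v > 0"
    and "p > 0"
  shows "Sp V Eun w p \<psi> = quadform V (Lp Eun w p \<psi>) \<psi>
       \<and> Sp V Eun w 2 \<psi> = quadform V (Lap Eun w) \<psi>"
proof -
  note finV = assms(1) and finE = assms(3) and EV = assms(4) and wpos = assms(5) and dpos = assms(6)
  have Efin: "\<forall>e\<in>Eun. finite e \<and> card e \<ge> 2" using EV finV finite_subset by blast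
  define d where "d = deg Eun w"
  define phi where "phi = (\<lambda>x. \<psi> x / sqrt (d x))"
  define a where "a = (\<lambda>e. w e / (real (card e) - 1))"
  define s where "s = (\<lambda>e. \<Sum>x\<in>e. phi x)"
  have main: "Sp V Eun w q \<psi> = quadform V (Lp Eun w q \<psi>) \<psi>" if q: "q > 0" for q
  proof -
    define g where "g = gfun Eun w q \<psi>"
    define Q where "Q = (\<lambda>e u v. (if u = v then real (card e) * g u else 0) - (g u + g v - gbar Eun w q \<psi> e))"
    define F where "F = (\<lambda>e v. a e * (s e - real (card e) * phi v)^2 / real (card e))"
    have N2': "(nodegradnorm Eun w \<psi> v)^2 = (\<Sum>e\<in>{e\<in>Eun. v \<in> e}. F e v)" for v
      using N2[OF finE Efin wpos, of \<psi> v] by (simp add: F_def a_def s_def phi_def d_def)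
    have pw: "nodegradnorm Eun w \<psi> v powr q = g v * (nodegradnorm Eun w \<psi> v)^2" for v
    proof -
      define N where "N = nodegradnorm Eun w \<psi> v"
      have N0: "N \<ge> 0" unfolding N_def nodegradnorm_def by (intro real_sqrt_ge_zero sum_nonneg) simp
      show ?thesis
      proof (cases "N > 0")
        case True
        have "N powr q = N powr (q - 2) * N powr 2" by (simp add: powr_add[symmetric])
        also have "N powr 2 = N^2" using True by (simp add: powr_numeral)
        finally show ?thesis using True by (simp add: g_def gfun_def N_def)
      next
        case False
        hence "N = 0" using N0 by simp
        thus ?thesis using q by (simp add: N_def)
      qed
    qed
    have LHS: "Sp V Eun w q \<psi> = (\<Sum>e\<in>Eun. \<Sum>v\<in>e. g v * F e v)"
    proof -
      have "Sp V Eun w q \<psi> = (\<Sum>v\<in>V. \<Sum>e\<in>{e\<in>Eun. v \<in> e}. g v * F e v)"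
        unfolding Sp_def pw N2' by (simp add: sum_distrib_left)
      also have "\<dots> = (\<Sum>e\<in>Eun. \<Sum>v\<in>{v\<in>V. v \<in> e}. g v * F e v)"
        using sum.swap_restrict[OF finV finE, of "\<lambda>v e. g v * F e v" "\<lambda>v e. v \<in> e"] by simp
      also have "\<dots> = (\<Sum>e\<in>Eun. \<Sum>v\<in>e. g v * F e v)"
        by (rule sum.cong[OF refl], rule restrict1[OF finV]) (use EV in auto)
      finally show ?thesis .
    qed
    have entry: "(if u = v then dp Eun w q \<psi> u else 0) - wp Eun w q \<psi> u v
        = (\<Sum>e\<in>Eun. if u \<in> e \<and> v \<in> e then a e * Q e u v else 0)" for u v
    proof (cases "u = v")
      case True
      have degu: "deg Eun w u = (\<Sum>e\<in>{e\<in>Eun. u \<in> e}. a e * (real (card e) - 1))"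
        unfolding deg_def a_def using Efin by (intro sum.cong refl) auto
      have "dp Eun w q \<psi> u = (\<Sum>e\<in>{e\<in>Eun. u \<in> e}. a e * (real (card e) - 1) * g u
              - a e * (g u - gbar Eun w q \<psi> e))"
        unfolding dp_def degu g_def a_def by (simp add: sum_distrib_right sum_subtractf)
      also have "\<dots> = (\<Sum>e\<in>{e\<in>Eun. u \<in> e}. a e * Q e u u)"
        by (intro sum.cong refl) (simp add: Q_def algebra_simps)
      also have "\<dots> = (\<Sum>e\<in>Eun. if u \<in> e \<and> u \<in> e then a e * Q e u u else 0)"
        using finE by (simp add: sum.inter_filter)
      finally have D: "dp Eun w q \<psi> u = (\<Sum>e\<in>Eun. if u \<in> e \<and> u \<in> e then a e * Q e u u else 0)" .
      show ?thesis unfolding True[symmetric] using D by (simp add: wp_def)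
    next
      case False
      have "- wp Eun w q \<psi> u v = (\<Sum>e\<in>{e\<in>Eun. u \<in> e \<and> v \<in> e}. a e * Q e u v)"
        using False unfolding wp_def Q_def a_def g_def
        by (simp add: sum_negf[symmetric]) (intro sum.cong refl, simp add: algebra_simps minus_divide_left)
      also have "\<dots> = (\<Sum>e\<in>Eun. if u \<in> e \<and> v \<in> e then a e * Q e u v else 0)"
        using finE by (simp add: sum.inter_filter)
      finally show ?thesis using False by simp
    qed
    have RHS: "quadform V (Lp Eun w q \<psi>) \<psi> = (\<Sum>e\<in>Eun. \<Sum>v\<in>e. g v * F e v)"
    proof -
      have "quadform V (Lp Eun w q \<psi>) \<psi>
          = (\<Sum>u\<in>V. \<Sum>v\<in>V. \<Sum>e\<in>Eun. if u \<in> e \<and> v \<in> e then phi u * (a e * Q e u v) * phi v else 0)"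
        unfolding quadform_def
      proof (intro sum.cong refl)
        fix u v assume u: "u \<in> V" and v: "v \<in> V"
        have su: "sqrt (d u) > 0" and sv: "sqrt (d v) > 0" using dpos u v by (auto simp: d_def)
        have "\<psi> u * Lp Eun w q \<psi> u v * \<psi> v
            = phi u * ((if u = v then dp Eun w q \<psi> u else 0) - wp Eun w q \<psi> u v) * phi v"
          unfolding Lp_def phi_def d_def[symmetric] by (rule cancel_lemma)
        also have "\<dots> = (\<Sum>e\<in>Eun. if u \<in> e \<and> v \<in> e then phi u * (a e * Q e u v) * phi v else 0)"
          unfolding entry sum_distrib_left sum_distrib_right by (intro sum.cong refl) auto
        finally show "\<psi> u * Lp Eun w q \<psi> u v * \<psi> v
            = (\<Sum>e\<in>Eun. if u \<in> e \<and> v \<in> e then phi u * (a e * Q e u v) * phi v else 0)" .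
      qed
      also have "\<dots> = (\<Sum>e\<in>Eun. \<Sum>u\<in>V. \<Sum>v\<in>V. if u \<in> e \<and> v \<in> e then phi u * (a e * Q e u v) * phi v else 0)"
      proof -
        have "(\<Sum>u\<in>V. \<Sum>v\<in>V. \<Sum>e\<in>Eun. if u \<in> e \<and> v \<in> e then phi u * (a e * Q e u v) * phi v else 0)
            = (\<Sum>u\<in>V. \<Sum>e\<in>Eun. \<Sum>v\<in>V. if u \<in> e \<and> v \<in> e then phi u * (a e * Q e u v) * phi v else 0)"
          by (rule sum.cong[OF refl], rule sum.swap)
        also have "\<dots> = (\<Sum>e\<in>Eun. \<Sum>u\<in>V. \<Sum>v\<in>V. if u \<in> e \<and> v \<in> e then phi u * (a e * Q e u v) * phi v else 0)"
          by (rule sum.swap)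
        finally show ?thesis .
      qed
      also have "\<dots> = (\<Sum>e\<in>Eun. \<Sum>u\<in>e. \<Sum>v\<in>e. phi u * (a e * Q e u v) * phi v)"
        by (rule sum.cong[OF refl], rule restrict2[OF finV]) (use EV in auto)
      also have "\<dots> = (\<Sum>e\<in>Eun. \<Sum>v\<in>e. g v * F e v)"
      proof (rule sum.cong[OF refl])
        fix e assume e: "e \<in> Eun"
        have fe: "finite e" and ne: "e \<noteq> {}" using Efin e by auto
        have "(\<Sum>u\<in>e. \<Sum>v\<in>e. phi u * (a e * Q e u v) * phi v)
            = a e * (\<Sum>u\<in>e. \<Sum>v\<in>e. phi u * ((if u = v then real (card e) * g u else 0)
                - (g u + g v - (\<Sum>x\<in>e. g x) / real (card e))) * phi v)"
        proof -
          have "(\<Sum>u\<in>e. \<Sum>v\<in>e. phi u * (a e * Q e u v) * phi v)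
              = (\<Sum>u\<in>e. \<Sum>v\<in>e. a e * (phi u * Q e u v * phi v))"
            by (intro sum.cong refl) (simp only: mult_ac)
          also have "\<dots> = a e * (\<Sum>u\<in>e. \<Sum>v\<in>e. phi u * Q e u v * phi v)"
            by (simp only: sum_distrib_left)
          finally show ?thesis unfolding Q_def gbar_def g_def .
        qed
        also have "\<dots> = a e * ((\<Sum>v\<in>e. g v * ((\<Sum>x\<in>e. phi x) - real (card e) * phi v)^2) / real (card e))"
          by (simp only: edge_identity[OF fe ne])
        also have "\<dots> = (\<Sum>v\<in>e. g v * F e v)"
          unfolding F_def s_def sum_distrib_left sum_divide_distrib
          by (intro sum.cong refl) (simp only: mult_ac times_divide_eq_right)
        finally show "(\<Sum>u\<in>e. \<Sum>v\<in>e. phi u * (a e * Q e u v) * phi v) = (\<Sum>v\<in>e. g v * F e v)" .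
      qed
      finally show ?thesis .
    qed
    show ?thesis using LHS RHS by simp
  qed
  have L2: "Lp Eun w 2 \<psi> u v = Lap Eun w u v" if "u \<in> V" "v \<in> V" for u v
  proof -
    have g1: "gfun Eun w 2 \<psi> x = 1" for x by (simp add: gfun_def)
    have gb: "gbar Eun w 2 \<psi> e = 1" if "e \<in> Eun" for e
    proof -
      have "card e \<ge> 2" using Efin that by auto
      thus ?thesis by (simp add: gbar_def g1)
    qed
    have z: "(\<Sum>e\<in>{e\<in>Eun. u \<in> e}. w e / (real (card e) - 1) * (1 - gbar Eun w 2 \<psi> e)) = 0"
      by (rule sum.neutral) (auto simp: gb)
    have "dp Eun w 2 \<psi> u = deg Eun w u" unfolding dp_def g1 using z by simp
    moreover have "wp Eun w 2 \<psi> u v = wadj Eun w u v" unfolding wp_def wadj_def g1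
      by (auto simp: gb intro!: sum.cong)
    ultimately show ?thesis by (cases "u = v") (simp_all add: Lp_def Lap_def)
  qed
  have "quadform V (Lp Eun w 2 \<psi>) \<psi> = quadform V (Lap Eun w) \<psi>"
    unfolding quadform_def by (intro sum.cong refl) (simp add: L2)
  thus ?thesis using main[OF assms(7)] main[of 2] by simp
qed

end
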